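(* Let $K_1,K_2>0$. For $0<x\le K_1$, $v>0$ and $x^2v\ge K_2$, \[ \varepsilon_1(x,v)-x\,\overline{\varepsilon_1(1/x,x^2v)}\ll(x^2v)^{-1/2}, \] where the implied constant depends only on $K_1$ and $K_2$, and \[ \varepsilon_1(x,v)=-\int_v^\infty\frac{e^{2\pi itx}}{\pi t}(\log t+2\gamma)\,dt+\frac{e^{2\pi ivx}}{v}\Delta(v)-\int_v^\infty\Delta(t)\frac{e^{2\pi itx}}{t^2}\,dt. \]
   Context: $\tau(n)$ is the number of divisors of $n$, $\gamma$ is Euler's constant, and for $t>0$, $\Delta(t)=\sum_{n\le t}\tau(n)-t(\log t+2\gamma-1)$. The first integral in $\varepsilon_1$ is an improper integral. *)

theory Defs
  imports "HOL-Analysis.Analysis"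
begin

definition tau :: "nat \<Rightarrow> nat" where
  "tau n = card {d. d dvd n}"

text \<open>Error term in the Dirichlet divisor problem, for t > 0.\<close>
definition Delta :: "real \<Rightarrow> real" where
  "Delta t = (\<Sum>n\<in>{1..nat \<lfloor>t\<rfloor>}. real (tau n)) - t * (ln t + 2 * euler_mascheroni - 1)"

definition improper_integral_from :: "real \<Rightarrow> (real \<Rightarrow> complex) \<Rightarrow> complex" where
  "improper_integral_from v f = Lim at_top (\<lambda>T. integral {v..T} f)"

definition eps1 :: "real \<Rightarrow> real \<Rightarrow> complex" where
  "eps1 x v =
     - improper_integral_from v
         (\<lambda>t. exp (2 * pi * \<i> * t * x) / (pi * t) * (ln t + 2 * euler_mascheroni))
     + exp (2 * pi * \<i> * v * x) / v * Delta v
     - integral {v..} (\<lambda>t. Delta t * exp (2 * pi * \<i> * t * x) / t\<^sup>2)"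

end

theory Submission
  imports Defs
begin

lemma tau_sum_card:
  fixes M :: nat
  shows "(\<Sum>n\<in>{1..M}. tau n) = card {(d,m). 1 \<le> d \<and> 1 \<le> m \<and> d*m \<le> M}"
proof -
  let ?S = "{(d,m). 1 \<le> d \<and> 1 \<le> m \<and> d*m \<le> M}"
  let ?T = "SIGMA n:{1..M}. {d. d dvd n}"
  have fin: "\<forall>n\<in>{1..M}. finite {d. d dvd n}"
    by (auto intro: finite_divisors_nat)
  have cT: "card ?T = (\<Sum>n\<in>{1..M}. tau n)"
    using fin by (simp add: tau_def)
  have bij: "bij_betw (\<lambda>(d,m). (d*m, d)) ?S ?T"
  proof (rule bij_betw_byWitness[where f'="\<lambda>(n,d). (d, n div d)"])
    show "\<forall>a\<in>?S. (\<lambda>(n,d). (d, n div d)) ((\<lambda>(d,m). (d*m, d)) a) = a"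
    proof
      fix a assume "a \<in> ?S"
      then obtain d m where a: "a = (d,m)" "1 \<le> d" by auto
      then have "d * m div d = m" by simp
      then show "(\<lambda>(n,d). (d, n div d)) ((\<lambda>(d,m). (d*m, d)) a) = a" using a by simp
    qed
    show "\<forall>a\<in>?T. (\<lambda>(d,m). (d*m, d)) ((\<lambda>(n,d). (d, n div d)) a) = a"
    proof
      fix a assume "a \<in> ?T"
      then obtain n d where a: "a = (n,d)" "d dvd n" by auto
      then have "d * (n div d) = n" by simp
      then show "(\<lambda>(d,m). (d*m, d)) ((\<lambda>(n,d). (d, n div d)) a) = a" using a by simp
    qed
    show "(\<lambda>(d,m). (d*m, d)) ` ?S \<subseteq> ?T"
    proof
      fix p assume "p \<in> (\<lambda>(d,m). (d*m, d)) ` ?S"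
      then obtain d m where p: "p = (d*m,d)" "1 \<le> d" "1 \<le> m" "d*m \<le> M" by auto
      then have "1 \<le> d*m" by simp
      with p show "p \<in> ?T" by auto
    qed
    show "(\<lambda>(n,d). (d, n div d)) ` ?T \<subseteq> ?S"
    proof
      fix p assume "p \<in> (\<lambda>(n,d). (d, n div d)) ` ?T"
      then obtain n d where p: "p = (d, n div d)" and n: "n \<in> {1..M}" and d: "d dvd n" by auto
      then obtain k where k: "n = d*k" by blast
      with n have "d \<ge> 1" "k \<ge> 1" by (auto intro: Nat.gr0I)
      moreover have "n div d = k" using k \<open>d \<ge> 1\<close> by simp
      ultimately show "p \<in> ?S" using k n p by simp
    qed
  qed
  have "card ?S = card ?T" using bij by (rule bij_betw_same_card)
  then show ?thesis using cT by simp
qed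
lemma card_row: "0 < d \<Longrightarrow> card {m::nat. 1 \<le> m \<and> d*m \<le> M} = M div d"
proof -
  assume d: "0 < d"
  have "{m::nat. 1 \<le> m \<and> d*m \<le> M} = {1..M div d}"
    using d by (auto simp: less_eq_div_iff_mult_less_eq mult.commute)
  then show ?thesis by simp
qed

lemma hyperbola_card:
  fixes M N :: nat
  assumes N1: "N*N \<le> M" and N2: "M < (N+1)*(N+1)"
  shows "card {(d,m). 1 \<le> d \<and> 1 \<le> m \<and> d*m \<le> M} + N*N = 2 * (\<Sum>d\<in>{1..N}. M div d)"
proof -
  let ?S = "{(d,m). 1 \<le> d \<and> 1 \<le> m \<and> d*m \<le> M}"
  define A where "A = (SIGMA d:{1..N}. {m. 1 \<le> m \<and> d*m \<le> M})"
  define B where "B = (\<lambda>(d,m). (m,d)) ` A"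
  have finrow: "finite {m::nat. 1 \<le> m \<and> d*m \<le> M}" if "d \<ge> 1" for d
  proof -
    have "{m::nat. 1 \<le> m \<and> d*m \<le> M} \<subseteq> {..M}"
    proof
      fix m assume "m \<in> {m::nat. 1 \<le> m \<and> d*m \<le> M}"
      then have "m \<le> d*m" "d*m \<le> M" using that by auto
      then show "m \<in> {..M}" by (metis atMost_iff order_trans)
    qed
    then show ?thesis using finite_subset by blast
  qed
  have "card A = (\<Sum>d\<in>{1..N}. card {m. 1 \<le> m \<and> d*m \<le> M})"
    unfolding A_def using finrow by simp
  also have "\<dots> = (\<Sum>d\<in>{1..N}. M div d)"
  proof (rule sum.cong)
    fix d assume "d \<in> {1..N}" then show "card {m. 1 \<le> m \<and> d*m \<le> M} = M div d"
      by (intro card_row) auto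
  qed simp
  finally have cA: "card A = (\<Sum>d\<in>{1..N}. M div d)" .
  have finA: "finite A" unfolding A_def using finrow by auto
  have cB: "card B = card A"
    unfolding B_def by (rule card_image) (auto simp: inj_on_def)
  have finB: "finite B" using finA B_def by simp
  have AB: "A \<union> B = ?S"
  proof
    show "A \<union> B \<subseteq> ?S" unfolding A_def B_def by (auto simp: mult.commute)
    show "?S \<subseteq> A \<union> B"
    proof
      fix p assume "p \<in> ?S"
      then obtain d m where p: "p = (d,m)" "1 \<le> d" "1 \<le> m" "d*m \<le> M" by auto
      have "d \<le> N \<or> m \<le> N"
      proof (rule ccontr)
        assume "\<not> (d \<le> N \<or> m \<le> N)"
        then have "N+1 \<le> d" "N+1 \<le> m" by auto
        then have "(N+1)*(N+1) \<le> d*m" by (rule mult_le_mono)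
        with p N2 show False by simp
      qed
      then show "p \<in> A \<union> B"
      proof
        assume "d \<le> N" then show ?thesis using p unfolding A_def by auto
      next
        assume "m \<le> N"
        then have "(m,d) \<in> A" using p unfolding A_def by (auto simp: mult.commute)
        then show ?thesis unfolding B_def using p by (auto simp: image_iff)
      qed
    qed
  qed
  have AiB: "A \<inter> B = {1..N} \<times> {1..N}"
  proof
    show "A \<inter> B \<subseteq> {1..N} \<times> {1..N}" unfolding A_def B_def by auto
    show "{1..N} \<times> {1..N} \<subseteq> A \<inter> B"
    proof
      fix p assume "p \<in> {1..N} \<times> {1..N}"
      then obtain d m where p: "p = (d,m)" "1 \<le> d" "d \<le> N" "1 \<le> m" "m \<le> N" by auto
      then have "d*m \<le> N*N" by (simp add: mult_le_mono)
      with N1 have dm: "d*m \<le> M" by simp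
      then have "m*d \<le> M" by (simp add: mult.commute)
      have "(m,d) \<in> A" using p \<open>m*d \<le> M\<close> unfolding A_def by auto
      then have "p \<in> B" unfolding B_def using p by (auto intro!: image_eqI[where x="(m,d)"])
      moreover have "p \<in> A" using p dm unfolding A_def by auto
      ultimately show "p \<in> A \<inter> B" by simp
    qed
  qed
  have "card (A \<union> B) + card (A \<inter> B) = card A + card B"
    using card_Un_Int[OF finA finB] by simp
  then show ?thesis using AB AiB cA cB by simp
qed
lemma harm_approx:
  fixes n :: nat assumes n: "n \<ge> 1"
  shows "0 \<le> harm n - ln (real n) - euler_mascheroni"
    and "harm n - ln (real n) - euler_mascheroni \<le> 1 / real n"
proof -
  have "euler_mascheroni \<le> harm n - ln (real n)"
  proof (rule LIMSEQ_le_const2[OF euler_mascheroni_LIMSEQ])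
    show "\<exists>N. \<forall>m\<ge>N. harm m - ln (real m) \<le> harm n - ln (real n)"
      using euler_mascheroni_sequence_decreasing[of n] n by auto
  qed
  then show "0 \<le> harm n - ln (real n) - euler_mascheroni" by simp
  have "euler_mascheroni \<ge> harm n - ln (real (Suc n)) + inverse (real (2*(n+1)))"
    using euler_mascheroni_bounds[OF n] by simp
  moreover have "inverse (real (2*(n+1))) \<ge> 0" by simp
  moreover have "ln (real (Suc n)) - ln (real n) \<le> 1 / real n"
  proof -
    have "ln (real (Suc n)) - ln (real n) = ln (real (Suc n) / real n)"
      using n by (simp add: ln_div)
    also have "\<dots> \<le> real (Suc n) / real n - 1"
      using n by (intro ln_le_minus_one) auto
    also have "\<dots> = 1 / real n" using n by (simp add: field_simps)
    finally show ?thesis .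
  qed
  ultimately show "harm n - ln (real n) - euler_mascheroni \<le> 1 / real n" by linarith
qed
lemma divsum_bound:
  fixes M :: nat assumes M: "M \<ge> 1"
  shows "\<bar>real (\<Sum>n\<in>{1..M}. tau n) - real M * (ln (real M) + 2*euler_mascheroni - 1)\<bar> \<le> 12 * sqrt (real M)"
proof -
  define r where "r = sqrt (real M)"
  define N where "N = nat \<lfloor>r\<rfloor>"
  have r1: "r \<ge> 1" using M by (simp add: r_def)
  have rr: "r * r = real M" by (simp add: r_def)
  have Nr: "real N \<le> r" "r < real N + 1" using r1 by (simp_all add: N_def)
  have N1: "N \<ge> 1" using r1 by (simp add: N_def le_nat_iff)
  have "real N * real N \<le> r * r" using Nr N1 by (intro mult_mono) auto
  then have "real (N*N) \<le> real M" using rr by simp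
  then have NN1: "N*N \<le> M" by (simp only: of_nat_le_iff)
  have "r * r < (real N + 1) * (real N + 1)" using Nr r1 by (intro mult_strict_mono) auto
  then have "real M < real ((N+1)*(N+1))" using rr by (simp add: algebra_simps)
  then have NN2: "M < (N+1)*(N+1)" by (simp only: of_nat_less_iff)
  have cnt: "real (\<Sum>n\<in>{1..M}. tau n) + real N * real N = 2 * (\<Sum>d\<in>{1..N}. real (M div d))"
  proof -
    have "(\<Sum>n\<in>{1..M}. tau n) + N*N = 2 * (\<Sum>d\<in>{1..N}. M div d)"
      using hyperbola_card[OF NN1 NN2] tau_sum_card[of M] by simp
    then have "real ((\<Sum>n\<in>{1..M}. tau n) + N*N) = real (2 * (\<Sum>d\<in>{1..N}. M div d))" by simp
    then show ?thesis by simp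
  qed
  define E where "E = (\<Sum>d\<in>{1..N}. real M / real d - real (M div d))"
  have E0: "0 \<le> E" unfolding E_def
    by (intro sum_nonneg) (simp add: of_nat_div_le_of_nat)
  have "E \<le> (\<Sum>d\<in>{1..N}. 1)" unfolding E_def
  proof (intro sum_mono)
    fix d assume d: "d \<in> {1..N}"
    have "M < (M div d + 1) * d" using d
      by (metis add.commute div_mult_mod_eq mod_less_divisor mult.commute mult_Suc nat_add_left_cancel_less
          plus_1_eq_Suc atLeastAtMost_iff less_le_trans zero_less_one)
    then have "real M < (real (M div d) + 1) * real d"
      by (metis of_nat_1 of_nat_add of_nat_less_iff of_nat_mult)
    then show "real M / real d - real (M div d) \<le> 1" using d by (simp add: field_simps)
  qed
  then have EN: "E \<le> real N" by simp
  define H :: real where "H = harm N"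
  have SH: "(\<Sum>d\<in>{1..N}. real M / real d) = real M * H"
    unfolding H_def harm_def by (simp add: sum_distrib_left divide_inverse)
  have D: "real (\<Sum>n\<in>{1..M}. tau n) = 2 * real M * H - 2 * E - real N * real N"
    using cnt SH unfolding E_def by (simp add: sum_subtractf)
  define th where "th = H - ln (real N) - euler_mascheroni"
  have th: "0 \<le> th" "th \<le> 1 / real N" using harm_approx[OF N1] by (simp_all add: th_def H_def)
  have lnM: "ln (real M) = 2 * ln r" using r1 rr by (metis ln_mult mult_2 linorder_not_le not_one_le_zero order_less_le_trans zero_less_one)
  have lnr: "0 \<le> ln r - ln (real N)" using Nr N1 by simp
  have lnr2: "ln r - ln (real N) \<le> 1 / real N"
  proof -
    have "ln r - ln (real N) = ln (r / real N)" using N1 r1 by (simp add: ln_div)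
    also have "\<dots> \<le> r / real N - 1" using N1 r1 by (intro ln_le_minus_one) auto
    also have "\<dots> = (r - real N) / real N" using N1 by (simp add: field_simps)
    also have "\<dots> \<le> 1 / real N" using Nr N1 by (intro divide_right_mono) auto
    finally show ?thesis .
  qed
  define X where "X = real M / real N"
  have X: "X \<le> 2 * r"
  proof -
    have "r \<le> 2 * real N" using Nr N1 by linarith
    then have "r * r \<le> 2 * real N * r" using r1 by (intro mult_right_mono) auto
    then show ?thesis using N1 rr by (simp add: X_def field_simps)
  qed
  have P1: "real M * (ln r - ln (real N)) \<le> X"
    using mult_left_mono[OF lnr2, of "real M"] by (simp add: X_def)
  have P1': "0 \<le> real M * (ln r - ln (real N))" using lnr by simp
  have P2: "real M * th \<le> X" using mult_left_mono[OF th(2), of "real M"] by (simp add: X_def)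
  have P2': "0 \<le> real M * th" using th by simp
  have P3: "0 \<le> real M - real N * real N" using NN1 by (metis of_nat_le_iff of_nat_mult diff_ge_0_iff_ge)
  have P4: "real M - real N * real N \<le> 2 * r"
  proof -
    have "real M - real N * real N = (r - real N) * (r + real N)" using rr by (simp add: algebra_simps)
    also have "\<dots> \<le> 1 * (r + real N)" using Nr by (intro mult_right_mono) auto
    finally show ?thesis using Nr by simp
  qed
  have key: "real (\<Sum>n\<in>{1..M}. tau n) - real M * (ln (real M) + 2*euler_mascheroni - 1)
     = - 2 * (real M * (ln r - ln (real N))) + 2 * (real M * th) - 2 * E + (real M - real N * real N)"
    unfolding D lnM th_def by (simp add: algebra_simps)
  show ?thesis unfolding key r_def[symmetric] using P1 P1' P2 P2' P3 P4 X E0 EN Nr by linarith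
qed
lemma ln_le_2sqrt: "t > 0 \<Longrightarrow> ln t \<le> 2 * sqrt t"
proof -
  assume t: "t > 0"
  have "ln t = 2 * ln (sqrt t)" using t by (simp add: ln_sqrt)
  also have "\<dots> \<le> 2 * (sqrt t - 1)" using t by (intro mult_left_mono ln_le_minus_one) auto
  finally show ?thesis by simp
qed

lemma neg_ln_le: "t > 0 \<Longrightarrow> - ln t \<le> 2 / sqrt t"
proof -
  assume t: "t > 0"
  have "- ln t = 2 * ln (1 / sqrt t)" using t by (simp add: ln_sqrt ln_div)
  also have "\<dots> \<le> 2 * (1 / sqrt t - 1)" using t by (intro mult_left_mono ln_le_minus_one) auto
  finally show ?thesis by simp
qed

lemma abs_ln_le: "t > 0 \<Longrightarrow> \<bar>ln t\<bar> \<le> 2 * sqrt t + 2 / sqrt t"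
  using ln_le_2sqrt[of t] neg_ln_le[of t] by (smt (verit) divide_nonneg_nonneg real_sqrt_ge_zero)

lemma gamma_bounds: "0 < (euler_mascheroni::real)" "euler_mascheroni < (1::real)"
  using euler_mascheroni_pos euler_mascheroni_less_13_over_22 by auto

lemma Delta_bound: assumes t: "t > 0" shows "\<bar>Delta t\<bar> \<le> 16 * sqrt t"
proof (cases "t \<ge> 1")
  case True
  define M where "M = nat \<lfloor>t\<rfloor>"
  have Mt: "real M \<le> t" "t < real M + 1" using True by (simp_all add: M_def)
  have M1: "M \<ge> 1" using True by (simp add: M_def le_nat_iff)
  have S: "\<bar>real (\<Sum>n\<in>{1..M}. tau n) - real M * (ln (real M) + 2*euler_mascheroni - 1)\<bar> \<le> 12 * sqrt t"
    using divsum_bound[OF M1] real_sqrt_le_mono[OF Mt(1)] by linarith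
  have Dt: "Delta t = real (\<Sum>n\<in>{1..M}. tau n) - t * (ln t + 2 * euler_mascheroni - 1)"
    unfolding Delta_def M_def by simp
  have Mpos: "real M > 0" using M1 by simp
  have a1: "0 \<le> (t - real M) * ln t" using Mt True by simp
  have a2: "(t - real M) * ln t \<le> 1 * ln t" using Mt True by (intro mult_right_mono) auto
  have lnd: "ln t - ln (real M) \<le> t / real M - 1"
    using ln_le_minus_one[of "t / real M"] Mpos t by (simp add: ln_div)
  have a3: "0 \<le> real M * (ln t - ln (real M))" using Mt Mpos by simp
  have a4: "real M * (ln t - ln (real M)) \<le> t - real M"
  proof -
    have "real M * (ln t - ln (real M)) \<le> real M * (t / real M - 1)"
      using mult_left_mono[OF lnd, of "real M"] Mpos by simp
    also have "real M * (t / real M - 1) = t - real M" using Mpos by (simp add: field_simps)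
    finally show ?thesis .
  qed
  have eq: "t * ln t - real M * ln (real M) = (t - real M) * ln t + real M * (ln t - ln (real M))"
    by (simp add: algebra_simps)
  have g: "\<bar>(2 * euler_mascheroni - 1) * (t - real M)\<bar> \<le> 1"
  proof -
    have "\<bar>2 * euler_mascheroni - 1\<bar> \<le> (1::real)" using gamma_bounds by linarith
    moreover have "\<bar>t - real M\<bar> \<le> 1" using Mt by linarith
    ultimately show ?thesis by (simp add: abs_mult mult_le_one)
  qed
  have l: "ln t \<le> 2 * sqrt t" using ln_le_2sqrt[OF t] .
  have s1: "1 \<le> sqrt t" using True by simp
  have "Delta t = (real (\<Sum>n\<in>{1..M}. tau n) - real M * (ln (real M) + 2*euler_mascheroni - 1))
      - (t * ln t - real M * ln (real M)) - (2 * euler_mascheroni - 1) * (t - real M)"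
    unfolding Dt by (simp add: algebra_simps)
  then show ?thesis using S eq a1 a2 a3 a4 g l s1 Mt by (smt (verit))
next
  case False
  then have fl: "nat \<lfloor>t\<rfloor> = 0" using t by linarith
  have Dt: "Delta t = - (t * ln t) - t * (2 * euler_mascheroni - 1)"
    unfolding Delta_def fl by (simp add: algebra_simps)
  have "- ln t \<le> 2 / sqrt t" using neg_ln_le[OF t] .
  then have "t * (- ln t) \<le> t * (2 / sqrt t)" using t by (intro mult_left_mono) auto
  also have "t * (2 / sqrt t) = 2 * sqrt t"
  proof -
    have "t = sqrt t * sqrt t" using t by simp
    then show ?thesis using t by (metis divide_self_if mult.commute nonzero_mult_div_cancel_left real_sqrt_eq_zero_cancel_iff times_divide_eq_left times_divide_eq_right less_irrefl)
  qed
  finally have b1: "- (t * ln t) \<le> 2 * sqrt t" by simp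
  have b0: "0 \<le> - (t * ln t)" using t False by (simp add: mult_nonneg_nonpos)
  have st: "t \<le> sqrt t"
  proof -
    have "sqrt t \<le> 1" using False by simp
    then have "sqrt t * sqrt t \<le> sqrt t * 1" using t by (intro mult_left_mono) auto
    then show ?thesis using t by simp
  qed
  have b2: "\<bar>t * (2 * euler_mascheroni - 1)\<bar> \<le> t"
    using gamma_bounds t by (simp add: abs_mult mult_le_cancel_left1)
  show ?thesis unfolding Dt using b0 b1 b2 st by linarith
qed
lemma powr_m32: "t > 0 \<Longrightarrow> t powr (-3/2) = 1 / (t * sqrt t)"
proof -
  assume t: "t > 0"
  have e1: "(-3/2::real) = - (1 + 1/2)" by linarith
  have "t powr (1 + 1/2) = t powr 1 * t powr (1/2)" by (rule powr_add)
  also have "\<dots> = t * sqrt t" using t by (simp only: powr_one_gt_zero_iff powr_half_sqrt less_imp_le powr_one)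
  finally have e2: "t powr (1 + 1/2) = t * sqrt t" .
  have "t powr (-3/2) = inverse (t powr (1 + 1/2))" unfolding e1 by (rule powr_minus)
  also have "\<dots> = inverse (t * sqrt t)" by (simp only: e2)
  also have "\<dots> = 1 / (t * sqrt t)" by (rule inverse_eq_divide)
  finally show ?thesis .
qed
lemma g_bound:
  assumes c: "c > 0" and t: "t \<ge> c"
  shows "\<bar>ln t + 2 * euler_mascheroni\<bar> / (pi * t) \<le> (2 + 2/c + 2/sqrt c) / sqrt t"
proof -
  define s where "s = sqrt t"
  have tp: "t > 0" using c t by simp
  have s0: "s > 0" using tp by (simp add: s_def)
  have ts: "t = s * s" using tp by (simp add: s_def)
  have sc: "sqrt c \<le> s" using t by (simp add: s_def)
  have sc0: "sqrt c > 0" using c by simp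
  have num: "\<bar>ln t + 2 * euler_mascheroni\<bar> \<le> 2 * s + 2 / s + 2"
    using abs_ln_le[OF tp] gamma_bounds unfolding s_def by linarith
  have tpi: "t \<le> pi * t" using mult_right_mono[of 1 pi t] tp pi_gt3 by simp
  have tpi2: "0 < pi * t * t" using tp by simp
  have "\<bar>ln t + 2 * euler_mascheroni\<bar> / (pi * t) \<le> \<bar>ln t + 2 * euler_mascheroni\<bar> / t"
    by (rule divide_left_mono[OF tpi abs_ge_zero tpi2])
  also have "\<dots> \<le> (2 * s + 2 / s + 2) / t" using num tp by (intro divide_right_mono) auto
  also have "\<dots> = (2 + 2 / (s * s) + 2 / s) / s" using s0 unfolding ts by (simp add: field_simps)
  also have "\<dots> \<le> (2 + 2/c + 2/sqrt c) / s"
  proof (intro divide_right_mono add_mono order_refl)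
    have "0 < s * s * c" using s0 c by simp
      then show "2 / (s * s) \<le> 2 / c" using t ts by (intro divide_left_mono) auto
    have "0 < s * sqrt c" using s0 sc0 by simp
    then show "2 / s \<le> 2 / sqrt c" using sc by (intro divide_left_mono) auto
  qed (use s0 in auto)
  finally show ?thesis by (simp add: s_def)
qed

lemma g'_bound:
  assumes c: "c > 0" and t: "t \<ge> c"
  shows "\<bar>1 - ln t - 2 * euler_mascheroni\<bar> / (pi * t\<^sup>2) \<le> (3/sqrt c + 2 + 2/c) * t powr (-3/2)"
proof -
  define s where "s = sqrt t"
  have tp: "t > 0" using c t by simp
  have s0: "s > 0" using tp by (simp add: s_def)
  have ts: "t = s * s" using tp by (simp add: s_def)
  have sc: "sqrt c \<le> s" using t by (simp add: s_def)
  have sc0: "sqrt c > 0" using c by simp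
  have num: "\<bar>1 - ln t - 2 * euler_mascheroni\<bar> \<le> 3 + 2 * s + 2 / s"
    using abs_ln_le[OF tp] gamma_bounds unfolding s_def by linarith
  have tpi: "t\<^sup>2 \<le> pi * t\<^sup>2" using mult_right_mono[of 1 pi "t\<^sup>2"] tp pi_gt3 by simp
  have tpi2: "0 < pi * t\<^sup>2 * t\<^sup>2" using tp by simp
  have "\<bar>1 - ln t - 2 * euler_mascheroni\<bar> / (pi * t\<^sup>2) \<le> \<bar>1 - ln t - 2 * euler_mascheroni\<bar> / t\<^sup>2"
    by (rule divide_left_mono[OF tpi abs_ge_zero tpi2])
  also have "\<dots> \<le> (3 + 2 * s + 2 / s) / t\<^sup>2" using num tp by (intro divide_right_mono) auto
  also have "\<dots> = (3 / s + 2 + 2 / (s * s)) * (1 / (t * sqrt t))" using s0 unfolding ts s_def[symmetric]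
    by (simp add: field_simps power2_eq_square)
  also have "\<dots> \<le> (3/sqrt c + 2 + 2/c) * (1 / (t * sqrt t))"
  proof (intro mult_right_mono add_mono order_refl)
    have "0 < s * s * c" using s0 c by simp
      then show "2 / (s * s) \<le> 2 / c" using t ts by (intro divide_left_mono) auto
    have "0 < s * sqrt c" using s0 sc0 by simp
    then show "3 / s \<le> 3 / sqrt c" using sc by (intro divide_left_mono) auto
  qed (use tp in auto)
  finally show ?thesis using powr_m32[OF tp] by simp
qed
lemma int_bound:
  fixes f :: "real \<Rightarrow> complex"
  assumes v: "v > 0" and B: "B \<ge> 0" and bnd: "\<And>t. t \<ge> v \<Longrightarrow> norm (f t) \<le> B * t powr (-3/2)"
  shows "norm (integral {v..} f) \<le> 2 * B / sqrt v"
proof -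
  have "((\<lambda>x. x powr (-3/2)) has_integral -(v powr (-3/2+1)) / (-3/2+1)) {v..}"
    using has_integral_powr_to_inf[of "-3/2" v] v by simp
  moreover have "-(v powr (-3/2+1)) / (-3/2+1) = 2 / sqrt v"
    using v by (simp add: powr_minus powr_half_sqrt[symmetric] field_simps)
  ultimately have "((\<lambda>x. x powr (-3/2)) has_integral 2 / sqrt v) {v..}" by simp
  then have gi: "((\<lambda>x. B * x powr (-3/2)) has_integral B * (2 / sqrt v)) {v..}"
    by (rule has_integral_mult_right)
  show ?thesis
  proof (cases "f integrable_on {v..}")
    case True
    have "norm (integral {v..} f) \<le> integral {v..} (\<lambda>x. B * x powr (-3/2))"
      by (rule integral_norm_bound_integral[OF True]) (use gi bnd in auto)
    also have "\<dots> = 2 * B / sqrt v" by (subst integral_unique[OF gi]) simp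
    finally show ?thesis .
  next
    case False
    then show ?thesis using B v by (simp add: not_integrable_integral)
  qed
qed

lemma int_tail:
  fixes f :: "real \<Rightarrow> complex"
  assumes v: "v > 0" and B: "B \<ge> 0" and bnd: "\<And>t. t \<ge> v \<Longrightarrow> norm (f t) \<le> B * t powr (-3/2)"
    and cont: "continuous_on {v..} f"
  shows "f integrable_on {v..}"
    and "((\<lambda>T. integral {v..T} f) \<longlongrightarrow> integral {v..} f) at_top"
proof -
  have intS: "f integrable_on {w..}" if w: "w \<ge> v" for w
  proof (rule measurable_bounded_by_integrable_imp_integrable)
    show "{w..} \<in> sets lebesgue" by simp
    show "f \<in> borel_measurable (lebesgue_on {w..})"
      by (rule continuous_imp_measurable_on_sets_lebesgue) (use cont w in \<open>auto intro: continuous_on_subset\<close>)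
    have "((\<lambda>x. x powr (-3/2)) has_integral -(w powr (-3/2+1)) / (-3/2+1)) {w..}"
      using has_integral_powr_to_inf[of "-3/2" w] v w by simp
    then have "((\<lambda>x. B * x powr (-3/2)) has_integral B * (-(w powr (-3/2+1)) / (-3/2+1))) {w..}"
      by (rule has_integral_mult_right)
    then show "(\<lambda>x. B * x powr (-3/2)) integrable_on {w..}"
      by (auto simp: integrable_on_def)
    show "\<And>x. x \<in> {w..} \<Longrightarrow> norm (f x) \<le> B * x powr (-3/2)" using bnd w by auto
  qed
  show "f integrable_on {v..}" using intS by simp
  have ev: "\<forall>\<^sub>F T in at_top. norm (integral {v..} f - integral {v..T} f) \<le> 2 * B / sqrt T"
  proof (rule eventually_at_top_linorderI[of v])
    fix T assume T: "T \<ge> v"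
    have "f integrable_on {v..T}"
      by (rule integrable_on_subinterval[OF intS[of v]]) auto
    then have iT: "(f has_integral integral {v..T} f) {v..T}"
      by (simp add: integrable_integral)
    have iT2: "(f has_integral integral {T..} f) {T..}"
      using intS[OF T] by (rule integrable_integral)
    have "(f has_integral (integral {v..T} f + integral {T..} f)) ({v..T} \<union> {T..})"
    proof (rule has_integral_Un[OF iT iT2])
      have "{v..T} \<inter> {T..} = {T}" using T by auto
      then show "negligible ({v..T} \<inter> {T..})" by simp
    qed
    moreover have "{v..T} \<union> {T..} = {v..}" using T by auto
    ultimately have "integral {v..} f = integral {v..T} f + integral {T..} f"
      by (simp add: integral_unique)
    then have "norm (integral {v..} f - integral {v..T} f) = norm (integral {T..} f)" by simp
    also have "\<dots> \<le> 2 * B / sqrt T" using T v B bnd by (intro int_bound) auto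
    finally show "norm (integral {v..} f - integral {v..T} f) \<le> 2 * B / sqrt T" .
  qed
  have "((\<lambda>T. 2 * B / sqrt T) \<longlongrightarrow> 0) at_top"
    by (intro tendsto_divide_0[OF tendsto_const] filterlim_at_top_imp_at_infinity sqrt_at_top)
  then have "((\<lambda>T. integral {v..} f - integral {v..T} f) \<longlongrightarrow> 0) at_top"
    by (rule Lim_null_comparison[OF ev])
  then have "((\<lambda>T. integral {v..} f - (integral {v..} f - integral {v..T} f)) \<longlongrightarrow> integral {v..} f - 0) at_top"
    by (intro tendsto_diff tendsto_const)
  then show "((\<lambda>T. integral {v..T} f) \<longlongrightarrow> integral {v..} f) at_top" by simp
qed
lemma osc_bound:
  fixes x v c :: real
  assumes x: "x > 0" and c: "c > 0" and v: "v \<ge> c"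
  shows "norm (improper_integral_from v (\<lambda>t. exp (complex_of_real (2 * pi) * \<i> * complex_of_real t * complex_of_real x) /
              complex_of_real (pi * t) * complex_of_real (ln t + 2 * euler_mascheroni)))
         \<le> ((2 + 2/c + 2/sqrt c) + 2 * (3/sqrt c + 2 + 2/c)) / (x * sqrt v)"
proof -
  define f where "f = (\<lambda>t. exp (complex_of_real (2 * pi) * \<i> * complex_of_real t * complex_of_real x) /
              complex_of_real (pi * t) * complex_of_real (ln t + 2 * euler_mascheroni))"
  define K1 where "K1 = 2 + 2/c + 2/sqrt c"
  define K2 where "K2 = 3/sqrt c + 2 + 2/c"
  have K1: "K1 \<ge> 0" "K2 \<ge> 0" using c by (simp_all add: K1_def K2_def)
  have v0: "v > 0" using c v by simp
  define \<alpha> where "\<alpha> = complex_of_real (2 * pi) * \<i> * complex_of_real x"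
  define g where "g = (\<lambda>t::real. (ln t + 2 * euler_mascheroni) / (pi * t))"
  define g' where "g' = (\<lambda>t::real. (1 - ln t - 2 * euler_mascheroni) / (pi * t\<^sup>2))"
  define E where "E = (\<lambda>t::real. exp (\<alpha> * complex_of_real t) / \<alpha>)"
  define G where "G = (\<lambda>t. E t * complex_of_real (g t))"
  define h where "h = (\<lambda>t. E t * complex_of_real (g' t))"
  have a0: "\<alpha> \<noteq> 0" using x by (simp add: \<alpha>_def)
  have na: "norm \<alpha> = 2 * pi * x" using x by (simp add: \<alpha>_def norm_mult)
  have ne: "norm (exp (\<alpha> * complex_of_real t)) = 1" for t
    unfolding \<alpha>_def by simp
  have nE: "norm (E t) = 1 / (2 * pi * x)" for t
    unfolding E_def norm_divide ne na by simp
  have f_eq: "f t = exp (\<alpha> * complex_of_real t) * complex_of_real (g t)" for t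
    unfolding f_def g_def \<alpha>_def by (simp add: mult_ac)
  have dE: "(E has_vector_derivative exp (\<alpha> * complex_of_real t)) (at t within S)" for t S
  proof -
    have "((\<lambda>z. exp (\<alpha> * z) / \<alpha>) has_field_derivative exp (\<alpha> * complex_of_real t)) (at (complex_of_real t))"
      using a0 by (auto intro!: derivative_eq_intros)
    then show ?thesis unfolding E_def by (rule has_vector_derivative_real_field)
  qed
  have dg: "(g has_real_derivative g' t) (at t within S)" if t: "t > 0" for t S
    unfolding g_def g'_def using t
    by (auto intro!: derivative_eq_intros simp: field_simps power2_eq_square)
  have dG: "(G has_vector_derivative (exp (\<alpha> * complex_of_real t) * complex_of_real (g t) + h t)) (at t within S)"
    if t: "t > 0" for t S
  proof -
    have "((\<lambda>t. complex_of_real (g t)) has_vector_derivative complex_of_real (g' t)) (at t within S)"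
      by (rule has_vector_derivative_of_real[OF dg[OF t]])
    from has_vector_derivative_mult[OF dE this]
    show ?thesis unfolding G_def h_def by (simp add: add.commute)
  qed
  have hbnd: "norm (h t) \<le> (K2 / (2 * pi * x)) * t powr (-3/2)" if t: "t \<ge> v" for t
  proof -
    have "norm (h t) = \<bar>g' t\<bar> / (2 * pi * x)" by (simp add: h_def norm_mult nE)
    also have "\<dots> \<le> (K2 * t powr (-3/2)) / (2 * pi * x)"
      using g'_bound[OF c, of t] v t x unfolding g'_def K2_def
      by (intro divide_right_mono) (auto simp: abs_divide abs_mult)
    finally show ?thesis by simp
  qed
  have hcont: "continuous_on {v..} h"
    unfolding h_def E_def g'_def using v0 a0 by (intro continuous_intros) auto
  have B0: "K2 / (2 * pi * x) \<ge> 0" using K1 x by simp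
  note ht = int_tail[OF v0 B0 hbnd hcont]
  define I where "I = integral {v..} h"
  have evT: "\<forall>\<^sub>F T in at_top. G T - G v - integral {v..T} h = integral {v..T} f"
  proof (rule eventually_at_top_linorderI[of v])
    fix T assume T: "T \<ge> v"
    have "((\<lambda>t. exp (\<alpha> * complex_of_real t) * complex_of_real (g t) + h t) has_integral (G T - G v)) {v..T}"
      using T v0 by (intro fundamental_theorem_of_calculus dG) auto
    moreover have "(h has_integral integral {v..T} h) {v..T}"
      by (rule integrable_integral, rule integrable_on_subinterval[OF ht(1)]) auto
    ultimately have "((\<lambda>t. (exp (\<alpha> * complex_of_real t) * complex_of_real (g t) + h t) - h t) has_integral (G T - G v - integral {v..T} h)) {v..T}"
      by (rule has_integral_diff)
    then have "(f has_integral (G T - G v - integral {v..T} h)) {v..T}"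
      by (simp add: f_eq[abs_def])
    then show "G T - G v - integral {v..T} h = integral {v..T} f"
      by (simp add: integral_unique)
  qed
  have gb: "\<bar>g t\<bar> \<le> K1 / sqrt t" if "t \<ge> c" for t
    using g_bound[OF c that] that c unfolding g_def K1_def by (simp add: abs_divide abs_mult)
  have nG: "norm (G t) = \<bar>g t\<bar> / (2 * pi * x)" for t
    by (simp add: G_def norm_mult nE)
  have G0: "(G \<longlongrightarrow> 0) at_top"
  proof (rule Lim_null_comparison)
    show "\<forall>\<^sub>F T in at_top. norm (G T) \<le> K1 / (2 * pi * x) / sqrt T"
    proof (rule eventually_at_top_linorderI[of c])
      fix T assume T: "T \<ge> c"
      have "norm (G T) \<le> (K1 / sqrt T) / (2 * pi * x)" unfolding nG
        using gb[OF T] x by (intro divide_right_mono) auto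
      then show "norm (G T) \<le> K1 / (2 * pi * x) / sqrt T" by (simp add: ac_simps)
    qed
    show "((\<lambda>T. K1 / (2 * pi * x) / sqrt T) \<longlongrightarrow> 0) at_top"
      by (intro tendsto_divide_0[OF tendsto_const] filterlim_at_top_imp_at_infinity sqrt_at_top)
  qed
  have "((\<lambda>T. G T - G v - integral {v..T} h) \<longlongrightarrow> 0 - G v - I) at_top"
    unfolding I_def by (intro tendsto_diff G0 tendsto_const ht(2))
  then have lim: "((\<lambda>T. integral {v..T} f) \<longlongrightarrow> - G v - I) at_top"
    using Lim_transform_eventually[OF _ evT] by simp
  have eq: "improper_integral_from v f = - G v - I"
    unfolding improper_integral_from_def by (rule tendsto_Lim[OF trivial_limit_at_top_linorder lim])
  have nI: "norm I \<le> 2 * (K2 / (2 * pi * x)) / sqrt v"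
    unfolding I_def by (rule int_bound[OF v0 B0 hbnd])
  have nGv: "norm (G v) \<le> (K1 / sqrt v) / (2 * pi * x)"
    unfolding nG using gb[OF v] x by (intro divide_right_mono) auto
  have m: "- G v - I = - (G v + I)" by simp
  have "norm (improper_integral_from v f) = norm (G v + I)"
    unfolding eq m by (rule norm_minus_cancel)
  also have "\<dots> \<le> norm (G v) + norm I" by (rule norm_triangle_ineq)
  also have "\<dots> \<le> (K1 / sqrt v) / (2 * pi * x) + 2 * (K2 / (2 * pi * x)) / sqrt v"
    using nGv nI by linarith
  also have "\<dots> = (K1 + 2 * K2) / (2 * pi) / (x * sqrt v)"
    using x v0 by (simp add: field_simps)
  also have "\<dots> \<le> (K1 + 2 * K2) / (x * sqrt v)"
  proof -
    have p1: "1 \<le> 2 * pi" using pi_gt3 by linarith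
    have "(K1 + 2 * K2) / (2 * pi) \<le> (K1 + 2 * K2) / 1"
      using K1 by (intro divide_left_mono p1) auto
    then have "(K1 + 2 * K2) / (2 * pi) \<le> (K1 + 2 * K2)" by simp
    then show ?thesis using x v0 by (intro divide_right_mono) auto
  qed
  finally show ?thesis unfolding f_def K1_def K2_def .
qed
lemma powr_mhalf: "w > 0 \<Longrightarrow> w powr (-1/2) = 1 / sqrt w"
proof -
  assume w: "w > 0"
  have e1: "(-1/2::real) = - (1/2)" by linarith
  have "w powr (-1/2) = inverse (w powr (1/2))" unfolding e1 by (rule powr_minus)
  also have "\<dots> = inverse (sqrt w)" using w by (simp only: powr_half_sqrt less_imp_le)
  also have "\<dots> = 1 / sqrt w" by (rule inverse_eq_divide)
  finally show ?thesis .
qed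

lemma eps1_bound:
  fixes y w c :: real
  assumes y: "y > 0" and c: "c > 0" and w: "w \<ge> c"
  shows "norm (eps1 y w) \<le> ((2 + 2/c + 2/sqrt c) + 2 * (3/sqrt c + 2 + 2/c)) / (y * sqrt w) + 48 / sqrt w"
proof -
  have w0: "w > 0" using c w by simp
  define A where "A = improper_integral_from w (\<lambda>t. exp (complex_of_real (2 * pi) * \<i> * complex_of_real t * complex_of_real y) /
              complex_of_real (pi * t) * complex_of_real (ln t + 2 * euler_mascheroni))"
  define B where "B = exp (complex_of_real (2 * pi) * \<i> * complex_of_real w * complex_of_real y) / complex_of_real w * complex_of_real (Delta w)"
  define I where "I = integral {w..} (\<lambda>t. complex_of_real (Delta t) * exp (complex_of_real (2 * pi) * \<i> * complex_of_real t * complex_of_real y) / (complex_of_real t)\<^sup>2)"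
  have e: "eps1 y w = - A + B - I" unfolding eps1_def A_def B_def I_def by simp
  have nA: "norm A \<le> ((2 + 2/c + 2/sqrt c) + 2 * (3/sqrt c + 2 + 2/c)) / (y * sqrt w)"
    unfolding A_def by (rule osc_bound[OF y c w])
  have ne: "norm (exp (complex_of_real (2 * pi) * \<i> * complex_of_real t * complex_of_real y)) = 1" for t
    by simp
  have nB: "norm B \<le> 16 / sqrt w"
  proof -
    have "norm B = \<bar>Delta w\<bar> / w" unfolding B_def using w0 by (simp add: norm_mult norm_divide ne)
    also have "\<dots> \<le> 16 * sqrt w / w" using Delta_bound[OF w0] w0 by (intro divide_right_mono) auto
    also have "\<dots> = 16 / sqrt w"
    proof -
      have "16 * sqrt w / w = 16 * (sqrt w / w)" by simp
      also have "\<dots> = 16 * inverse (sqrt w)" using w0 by (simp only: sqrt_divide_self_eq less_imp_le)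
      finally show ?thesis by (simp add: divide_inverse)
    qed
    finally show ?thesis .
  qed
  have nI: "norm I \<le> 2 * 16 / sqrt w"
    unfolding I_def
  proof (rule int_bound[OF w0])
    fix t assume t: "t \<ge> w"
    then have t0: "t > 0" using w0 by simp
    have "norm (complex_of_real (Delta t) * exp (complex_of_real (2 * pi) * \<i> * complex_of_real t * complex_of_real y) / (complex_of_real t)\<^sup>2)
        = \<bar>Delta t\<bar> / t\<^sup>2" by (simp add: norm_mult norm_divide ne norm_power)
    also have "\<dots> \<le> 16 * sqrt t / t\<^sup>2" using Delta_bound[OF t0] t0 by (intro divide_right_mono) auto
    also have "\<dots> = 16 * (1 / (t * sqrt t))"
    proof -
      have "sqrt t * sqrt t = t" using t0 by simp
      then show ?thesis using t0 by (simp add: field_simps power2_eq_square)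
    qed
    also have "\<dots> = 16 * t powr (-3/2)" using powr_m32[OF t0] by simp
    finally show "norm (complex_of_real (Delta t) * exp (complex_of_real (2 * pi) * \<i> * complex_of_real t * complex_of_real y) / (complex_of_real t)\<^sup>2) \<le> 16 * t powr (-3/2)" .
  qed simp
  have "norm (eps1 y w) \<le> norm (- A + B) + norm I"
    unfolding e by (rule norm_triangle_ineq4)
  moreover have "norm (- A + B) \<le> norm (- A) + norm B" by (rule norm_triangle_ineq)
  moreover have "norm (- A) = norm A" by (rule norm_minus_cancel)
  ultimately show ?thesis using nA nB nI by linarith
qed
theorem proposition13:
  fixes K1 K2 :: real
  assumes "K1 > 0" and "K2 > 0"
  shows "\<exists>C. \<forall>x v. 0 < x \<and> x \<le> K1 \<and> v > 0 \<and> x\<^sup>2 * v \<ge> K2 \<longrightarrow>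
           norm (eps1 x v - of_real x * cnj (eps1 (1 / x) (x\<^sup>2 * v)))
             \<le> C * (x\<^sup>2 * v) powr (-1/2)"
proof -
  define c where "c = min K2 (K2 / K1\<^sup>2)"
  have c0: "c > 0" using assms by (simp add: c_def)
  define Kc where "Kc = (2 + 2/c + 2/sqrt c) + 2 * (3/sqrt c + 2 + 2/c)"
  have Kc0: "Kc \<ge> 0" using c0 by (simp add: Kc_def)
  define C where "C = Kc + 48 * K1 + K1\<^sup>2 * Kc + 48 * K1"
  show ?thesis
  proof (intro exI[of _ C] allI impI)
    fix x v :: real
    assume h: "0 < x \<and> x \<le> K1 \<and> v > 0 \<and> x\<^sup>2 * v \<ge> K2"
    then have x: "x > 0" "x \<le> K1" and v: "v > 0" and w: "x\<^sup>2 * v \<ge> K2" by auto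
    define w where "w = x\<^sup>2 * v"
    have w0: "w > 0" using x v by (simp add: w_def)
    have wc: "w \<ge> c" using w unfolding w_def c_def by linarith
    have x2: "x\<^sup>2 \<le> K1\<^sup>2" using x by (intro power_mono) auto
    have vc: "v \<ge> c"
    proof -
      have "K2 / K1\<^sup>2 \<le> (x\<^sup>2 * v) / x\<^sup>2" using w x2 x assms
        by (intro frac_le) auto
      also have "\<dots> = v" using x by simp
      finally show ?thesis unfolding c_def by linarith
    qed
    define s where "s = sqrt w"
    have s: "s = x * sqrt v" unfolding s_def w_def using x by (simp add: real_sqrt_mult)
    have s0: "s > 0" using w0 by (simp add: s_def)
    have sv0: "sqrt v > 0" using v by simp
    have b1: "norm (eps1 x v) \<le> Kc / s + 48 * x / s"
    proof -
      have "norm (eps1 x v) \<le> Kc / (x * sqrt v) + 48 / sqrt v"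
        using eps1_bound[OF x(1) c0 vc] unfolding Kc_def .
      also have "48 / sqrt v = 48 * x / s" unfolding s using x by simp
      finally show ?thesis unfolding s .
    qed
    have b2: "norm (eps1 (1/x) w) \<le> Kc * x / s + 48 / s"
    proof -
      have "norm (eps1 (1/x) w) \<le> Kc / ((1/x) * sqrt w) + 48 / sqrt w"
        using eps1_bound[of "1/x" c w] x c0 wc unfolding Kc_def by simp
      also have "Kc / ((1/x) * sqrt w) = Kc * x / s" unfolding s_def using x by simp
      finally show ?thesis unfolding s_def .
    qed
    have "norm (eps1 x v - of_real x * cnj (eps1 (1 / x) w)) \<le> norm (eps1 x v) + x * norm (eps1 (1/x) w)"
      using x by (metis norm_triangle_ineq4 norm_mult norm_of_real complex_mod_cnj abs_of_pos)
    also have "\<dots> \<le> (Kc / s + 48 * x / s) + x * (Kc * x / s + 48 / s)"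
      using b1 b2 x by (intro add_mono mult_left_mono) auto
    also have "\<dots> = (Kc + 48 * x + x\<^sup>2 * Kc + 48 * x) / s"
      by (simp add: add_divide_distrib power2_eq_square algebra_simps)
    also have "\<dots> \<le> C / s"
    proof (intro divide_right_mono)
      have "x\<^sup>2 * Kc \<le> K1\<^sup>2 * Kc" using x2 Kc0 by (rule mult_right_mono)
      then show "Kc + 48 * x + x\<^sup>2 * Kc + 48 * x \<le> C" unfolding C_def using x by linarith
    qed (use s0 in auto)
    also have "C / s = C * w powr (-1/2)" unfolding s_def using powr_mhalf[OF w0] by simp
    finally show "norm (eps1 x v - of_real x * cnj (eps1 (1 / x) (x\<^sup>2 * v))) \<le> C * (x\<^sup>2 * v) powr (-1/2)"
      unfolding w_def .
  qed
qed
end
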